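(* Let $G$ be a compact Abelian group with a continuous length function $l$, and let $(H_n)_{n\in\mathbb{N}}$ be closed subgroups of $G$ converging to $G$ for the Hausdorff distance of $d_l(g,g')=l(g^{-1}g')$. For each $n$ let $J_n\subseteq\widehat G$ be the annihilator of $H_n$ and $q_n:\widehat G\to\widehat{H_n}=\widehat G/J_n$ the canonical surjection. Let $F$ be a finite subset of $\widehat G$. Then there exists $N\in\mathbb{N}$ such that for all $n\ge N$, $q_n$ is injective on $F$.
   Context: A length function: $l\ge0$, $l(g)=0$ iff $g$ is the unit, symmetric, subadditive. *)

theory Defs
  imports "HOL-Analysis.Analysis"
begin

text \<open>Compact abelian groups are modelled as a type of class topological_ab_group_add
(additive notation: g^{-1} g' becomes -g + g') which is Hausdorff and compact.\<close>

definition length_function :: "('a::ab_group_add \<Rightarrow> real) \<Rightarrow> bool" where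
  "length_function l \<longleftrightarrow>
     (\<forall>g. 0 \<le> l g) \<and> (\<forall>g. l g = 0 \<longleftrightarrow> g = 0) \<and>
     (\<forall>g. l (- g) = l g) \<and> (\<forall>g h. l (g + h) \<le> l g + l h)"

definition length_dist :: "('a::ab_group_add \<Rightarrow> real) \<Rightarrow> 'a \<Rightarrow> 'a \<Rightarrow> real" where
  "length_dist l g g' = l (- g + g')"

definition closed_subgroup :: "'a::topological_ab_group_add set \<Rightarrow> bool" where
  "closed_subgroup H \<longleftrightarrow> closed H \<and> 0 \<in> H \<and>
     (\<forall>x\<in>H. \<forall>y\<in>H. x + y \<in> H) \<and> (\<forall>x\<in>H. - x \<in> H)"

definition hausdorff_dist :: "('a \<Rightarrow> 'a \<Rightarrow> real) \<Rightarrow> 'a set \<Rightarrow> 'a set \<Rightarrow> real" where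
  "hausdorff_dist d A B =
     max (SUP a\<in>A. INF b\<in>B. d a b) (SUP b\<in>B. INF a\<in>A. d a b)"

definition dual_group :: "('a::topological_ab_group_add \<Rightarrow> complex) set" where
  "dual_group = {c. continuous_on UNIV c \<and> (\<forall>x. norm (c x) = 1) \<and>
                     (\<forall>x y. c (x + y) = c x * c y)}"

definition annihilator :: "'a::topological_ab_group_add set \<Rightarrow> ('a \<Rightarrow> complex) set" where
  "annihilator H = {c \<in> dual_group. \<forall>h\<in>H. c h = 1}"

definition quot_map :: "('a \<Rightarrow> complex) set \<Rightarrow> ('a \<Rightarrow> complex) \<Rightarrow> ('a \<Rightarrow> complex) set" where
  "quot_map J c = (\<lambda>\<psi>. \<lambda>x. c x * \<psi> x) ` J"

end

theory Submission
  imports Defs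
begin

lemma char_zero: assumes "c \<in> dual_group" shows "c 0 = 1"
proof -
  have "c 0 = c 0 * c 0" using assms unfolding dual_group_def by (metis (mono_tags, lifting) add_0 mem_Collect_eq)
  moreover have "norm (c 0) = 1" using assms unfolding dual_group_def by auto
  hence "c 0 \<noteq> 0" by auto
  ultimately show ?thesis by (metis mult_cancel_left2)
qed

lemma key:
  fixes l :: "'a::{topological_ab_group_add, t2_space} \<Rightarrow> real"
    and H :: "nat \<Rightarrow> 'a set"
  assumes cpt: "compact (UNIV :: 'a set)"
    and lf: "length_function l"
    and lc: "continuous_on UNIV l"
    and sg: "\<And>n. closed_subgroup (H n)"
    and lim: "(\<lambda>n. hausdorff_dist (length_dist l) (H n) UNIV) \<longlonglongrightarrow> 0"
    and c1: "c1 \<in> dual_group" and c2: "c2 \<in> dual_group" and ne: "c1 \<noteq> c2"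
  shows "eventually (\<lambda>n. quot_map (annihilator (H n)) c1 \<noteq> quot_map (annihilator (H n)) c2) sequentially"
proof -
  obtain g where g: "c1 g \<noteq> c2 g" using ne by auto
  define D where "D = (\<lambda>x. norm (c1 x - c2 x))"
  define \<epsilon> where "\<epsilon> = D g"
  have epos: "\<epsilon> > 0" using g unfolding \<epsilon>_def D_def by auto
  define K where "K = {x. D x \<ge> \<epsilon>}"
  have contD: "continuous_on UNIV D" unfolding D_def using c1 c2 unfolding dual_group_def
    by (auto intro!: continuous_intros)
  have "closed K" unfolding K_def by (rule closed_Collect_le[OF continuous_on_const contD])
  hence cK: "compact K" using cpt by (metis compact_Int_closed inf_top.left_neutral)
  have gK: "g \<in> K" unfolding K_def \<epsilon>_def by auto
  obtain k where kK: "k \<in> K" and kmin: "\<forall>y\<in>K. l k \<le> l y"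
    using continuous_attains_inf[OF cK _ continuous_on_subset[OF lc]] gK by blast
  have "k \<noteq> 0" using kK epos char_zero[OF c1] char_zero[OF c2] unfolding K_def D_def by auto
  hence dpos: "l k > 0" using lf unfolding length_function_def by (metis order_le_less)
  obtain M where M: "\<forall>x. l x \<le> M"
    using continuous_attains_sup[OF cpt _ lc] by blast
  have lnn: "\<And>x. 0 \<le> l x" using lf unfolding length_function_def by auto
  have ev: "eventually (\<lambda>n. hausdorff_dist (length_dist l) (H n) UNIV < l k) sequentially"
    using lim dpos by (metis order_tendstoD(2))
  show ?thesis
  proof (rule eventually_mono[OF ev])
    fix n assume hn: "hausdorff_dist (length_dist l) (H n) UNIV < l k"
    show "quot_map (annihilator (H n)) c1 \<noteq> quot_map (annihilator (H n)) c2"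
    proof
      assume eq: "quot_map (annihilator (H n)) c1 = quot_map (annihilator (H n)) c2"
      have oneA: "(\<lambda>x. 1) \<in> annihilator (H n)"
        unfolding annihilator_def dual_group_def by auto
      have "c1 \<in> quot_map (annihilator (H n)) c1"
        unfolding quot_map_def using oneA by (auto intro!: image_eqI[where x="\<lambda>x. 1"])
      then obtain \<psi> where psi: "\<psi> \<in> annihilator (H n)" and c1e: "c1 = (\<lambda>x. c2 x * \<psi> x)"
        using eq unfolding quot_map_def by auto
      have Hs: "0 \<in> H n" "\<And>x. x \<in> H n \<Longrightarrow> - x \<in> H n"
        using sg[of n] unfolding closed_subgroup_def by auto
      have same: "\<And>h. h \<in> H n \<Longrightarrow> c1 h = c2 h"
        using psi c1e unfolding annihilator_def by auto
      have inK: "-a + g \<in> K" if a: "a \<in> H n" for a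
      proof -
        have e: "c1 (-a) = c2 (-a)" using same Hs(2)[OF a] by blast
        have "c1 (-a+g) - c2 (-a+g) = c1 (-a) * (c1 g - c2 g)"
        proof -
          have m1: "c1 (-a+g) = c1 (-a) * c1 g" using c1 unfolding dual_group_def by blast
          have m2: "c2 (-a+g) = c2 (-a) * c2 g" using c2 unfolding dual_group_def by blast
          show ?thesis unfolding m1 m2 e by (simp add: algebra_simps)
        qed
        hence "D (-a+g) = norm (c1 (-a)) * \<epsilon>"
          unfolding D_def \<epsilon>_def by (simp add: norm_mult)
        also have "norm (c1 (-a)) = 1" using c1 unfolding dual_group_def by auto
        finally show ?thesis unfolding K_def by simp
      qed
      have inf: "l k \<le> (INF a\<in>H n. length_dist l a g)"
        unfolding length_dist_def
        using Hs(1) inK kmin by (auto intro!: cINF_greatest)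
      have bdd: "bdd_above ((\<lambda>b. INF a\<in>H n. length_dist l a b) ` UNIV)"
      proof (rule bdd_aboveI[where M=M], clarsimp)
        fix b
        have bb: "bdd_below ((\<lambda>a. length_dist l a b) ` H n)"
          using lnn unfolding length_dist_def by (intro bdd_belowI[where m=0]) auto
        have "(INF a\<in>H n. length_dist l a b) \<le> length_dist l 0 b"
          by (rule cINF_lower[OF bb Hs(1)])
        also have "\<dots> \<le> M" using M unfolding length_dist_def by auto
        finally show "(INF a\<in>H n. length_dist l a b) \<le> M" .
      qed
      have "(INF a\<in>H n. length_dist l a g) \<le> (SUP b\<in>UNIV. INF a\<in>H n. length_dist l a b)"
        using bdd by (auto intro!: cSUP_upper)
      also have "\<dots> \<le> hausdorff_dist (length_dist l) (H n) UNIV"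
        unfolding hausdorff_dist_def by simp
      finally show False using inf hn by simp
    qed
  qed
qed

theorem mainTheorem10:
  fixes l :: "'a::{topological_ab_group_add, t2_space} \<Rightarrow> real"
    and H :: "nat \<Rightarrow> 'a set"
    and F :: "('a \<Rightarrow> complex) set"
  assumes "compact (UNIV :: 'a set)"
    and "length_function l"
    and "continuous_on UNIV l"
    and "\<And>n. closed_subgroup (H n)"
    and "(\<lambda>n. hausdorff_dist (length_dist l) (H n) UNIV) \<longlonglongrightarrow> 0"
    and "finite F"
    and "F \<subseteq> dual_group"
  shows "\<exists>N. \<forall>n\<ge>N. inj_on (quot_map (annihilator (H n))) F"
proof -
  have "eventually (\<lambda>n. \<forall>p\<in>F \<times> F. fst p \<noteq> snd p \<longrightarrow>
      quot_map (annihilator (H n)) (fst p) \<noteq> quot_map (annihilator (H n)) (snd p)) sequentially"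
  proof (rule eventually_ball_finite)
    show "finite (F \<times> F)" using assms(6) by simp
    show "\<forall>p\<in>F \<times> F. eventually (\<lambda>n. fst p \<noteq> snd p \<longrightarrow>
      quot_map (annihilator (H n)) (fst p) \<noteq> quot_map (annihilator (H n)) (snd p)) sequentially"
    proof
      fix p assume p: "p \<in> F \<times> F"
      show "eventually (\<lambda>n. fst p \<noteq> snd p \<longrightarrow>
        quot_map (annihilator (H n)) (fst p) \<noteq> quot_map (annihilator (H n)) (snd p)) sequentially"
      proof (cases "fst p = snd p")
        case False
        then show ?thesis using key[OF assms(1-5), of "fst p" "snd p"] p assms(7)
          by (auto simp: subset_iff mem_Times_iff)
      qed simp
    qed
  qed
  then obtain N where "\<forall>n\<ge>N. \<forall>p\<in>F \<times> F. fst p \<noteq> snd p \<longrightarrow>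
      quot_map (annihilator (H n)) (fst p) \<noteq> quot_map (annihilator (H n)) (snd p)"
    unfolding eventually_sequentially by blast
  hence "\<forall>n\<ge>N. inj_on (quot_map (annihilator (H n))) F"
    unfolding inj_on_def by fastforce
  thus ?thesis by blast
qed

end
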